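(* Let $U:\mathbb{R}^d\to[0,+\infty)$ be convex and $M$-Lipschitz with $M\ge0$. Then for any $\kappa>0$ and $z,z'\in\mathbb{R}^d$, $$\langle\mathrm{prox}^\kappa_U(z)-z,z\rangle\le-\kappa U(z)+\kappa^2M^2+\kappa\{U(z')+M\|z'\|\}.$$
   Context: $\mathrm{prox}^\kappa_U(x)=\arg\min_{\tilde x\in\mathbb{R}^d}\{U(\tilde x)+\|x-\tilde x\|^2/(2\kappa)\}$; $\|\cdot\|$ Euclidean. *)

theory Defs
  imports "HOL-Analysis.Analysis"
begin

definition prox :: "real \<Rightarrow> ('a::euclidean_space \<Rightarrow> real) \<Rightarrow> 'a \<Rightarrow> 'a" where
  "prox \<kappa> U x = arg_min (\<lambda>y. U y + (norm (x - y))\<^sup>2 / (2 * \<kappa>)) (\<lambda>_. True)"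

end

theory Submission
  imports Defs
begin

lemma small_t_lemma:
  fixes a c :: real
  assumes "c \<ge> 0" "\<And>t. 0 < t \<Longrightarrow> t \<le> 1 \<Longrightarrow> a + t * c \<ge> 0"
  shows "a \<ge> 0"
proof (rule ccontr)
  assume na: "\<not> a \<ge> 0"
  show False
  proof (cases "c = 0")
    case True then show ?thesis using assms(2)[of 1] na by simp
  next
    case False
    hence cp: "c > 0" using assms(1) by simp
    define t where "t = min 1 (-a/(2*c))"
    have "-a/(2*c) > 0" using na cp by (intro divide_pos_pos) auto
    hence t0: "t > 0" by (simp add: t_def)
    have "t * c \<le> (-a/(2*c)) * c" using cp by (intro mult_right_mono) (auto simp: t_def)
    also have "\<dots> = -a/2" using cp by simp
    finally have "a + t * c < 0" using na by simp
    moreover have "t \<le> 1" by (simp add: t_def)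
    ultimately show False using assms(2)[of t] t0 by linarith
  qed
qed

theorem lemma10:
  fixes U :: "'a::euclidean_space \<Rightarrow> real" and M \<kappa> :: real and z z' :: 'a
  assumes "\<And>x. U x \<ge> 0"
    and "convex_on UNIV U"
    and "M-lipschitz_on UNIV U"
    and "M \<ge> 0"
    and "\<kappa> > 0"
  shows "inner (prox \<kappa> U z - z) z \<le> - \<kappa> * U z + \<kappa>\<^sup>2 * M\<^sup>2 + \<kappa> * (U z' + M * norm z')"
proof -
  define f where "f = (\<lambda>y. U y + (norm (z - y))\<^sup>2 / (2 * \<kappa>))"
  have contU: "continuous_on UNIV U" using assms(3) by (rule lipschitz_on_continuous_on)
  have k0: "2 * \<kappa> \<noteq> 0" using assms(5) by simp
  have contf: "continuous_on UNIV f" unfolding f_def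
    by (intro continuous_intros contU ballI k0)
  define S where "S = {y. f y \<le> f z}"
  have "closed S" unfolding S_def
    by (intro closed_Collect_le contf continuous_on_const)
  moreover have "bounded S"
  proof -
    have "norm (z - y) \<le> sqrt (2 * \<kappa> * f z)" if "y \<in> S" for y
    proof -
      have "(norm (z - y))\<^sup>2 / (2 * \<kappa>) \<le> f z" using that assms(1)[of y] by (simp add: S_def f_def)
      hence "(norm (z - y))\<^sup>2 \<le> 2 * \<kappa> * f z" using assms(5) by (simp add: field_simps)
      thus ?thesis by (simp add: real_le_rsqrt)
    qed
    hence "\<forall>y\<in>S. dist z y \<le> sqrt (2 * \<kappa> * f z)" by (simp add: dist_norm)
    thus ?thesis unfolding bounded_def by blast
  qed
  ultimately have cS: "compact S" by (simp add: compact_eq_bounded_closed)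
  have nS: "S \<noteq> {}" using S_def by auto
  have cfS: "continuous_on S f" using contf by (rule continuous_on_subset) simp
  obtain q where q: "q \<in> S" "\<And>y. y \<in> S \<Longrightarrow> f q \<le> f y"
    using continuous_attains_inf[OF cS nS cfS] by blast
  have qmin: "f q \<le> f y" for y
  proof (cases "y \<in> S")
    case True then show ?thesis using q by blast
  next
    case False then show ?thesis using q(1) by (auto simp: S_def)
  qed
  define p where "p = prox \<kappa> U z"
  have pmin: "f p \<le> f y" for y
  proof -
    have "is_arg_min f (\<lambda>_. True) q" using qmin by (auto simp: is_arg_min_def not_less)
    hence "is_arg_min f (\<lambda>_. True) (arg_min f (\<lambda>_. True))"
      unfolding arg_min_def by (rule someI)
    moreover have "arg_min f (\<lambda>_. True) = p" by (simp add: p_def prox_def f_def)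
    ultimately show ?thesis by (auto simp: is_arg_min_def not_less)
  qed
  have key: "inner (z - p) p \<ge> \<kappa> * (U p - U 0)"
  proof -
    have "(U 0 - U p + inner (z - p) p / \<kappa>) + t * ((norm p)\<^sup>2 / (2 * \<kappa>)) \<ge> 0"
      if t: "0 < t" "t \<le> 1" for t
    proof -
      have c: "U ((1 - t) *\<^sub>R p + t *\<^sub>R 0) \<le> (1 - t) * U p + t * U 0"
        using assms(2) t by (intro convex_onD) auto
      have "f p \<le> f ((1 - t) *\<^sub>R p)" by (rule pmin)
      hence "U p + (norm (z - p))\<^sup>2 / (2 * \<kappa>) \<le> (1 - t) * U p + t * U 0 + (norm (z - p + t *\<^sub>R p))\<^sup>2 / (2 * \<kappa>)"
        using c by (simp add: f_def algebra_simps)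
      moreover have "(norm (z - p + t *\<^sub>R p))\<^sup>2 = (norm (z - p))\<^sup>2 + 2 * t * inner (z - p) p + t\<^sup>2 * (norm p)\<^sup>2"
        unfolding power2_norm_eq_inner
        by (simp add: inner_add_left inner_add_right inner_diff_left inner_diff_right inner_commute power2_eq_square algebra_simps)
      hence "(norm (z - p + t *\<^sub>R p))\<^sup>2 / (2 * \<kappa>) = (norm (z - p))\<^sup>2 / (2 * \<kappa>) + (2 * t * inner (z - p) p + t\<^sup>2 * (norm p)\<^sup>2) / (2 * \<kappa>)"
        by (simp add: add_divide_distrib)
      ultimately have "0 \<le> t * (U 0 - U p) + (2 * t * inner (z - p) p + t\<^sup>2 * (norm p)\<^sup>2) / (2 * \<kappa>)"
        by (simp add: algebra_simps)
      also have "\<dots> = t * ((U 0 - U p + inner (z - p) p / \<kappa>) + t * ((norm p)\<^sup>2 / (2 * \<kappa>)))"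
        using assms(5) by (simp add: field_simps power2_eq_square)
      finally show ?thesis using t by (simp add: zero_le_mult_iff)
    qed
    note H = this
    have cnn: "(norm p)\<^sup>2 / (2 * \<kappa>) \<ge> 0" using assms(5) by simp
    have "U 0 - U p + inner (z - p) p / \<kappa> \<ge> 0"
      by (rule small_t_lemma[OF cnn H])
    thus ?thesis using assms(5) by (simp add: field_simps)
  qed
  have L1: "U z - U p \<le> M * norm (z - p)"
    using lipschitz_onD[OF assms(3), of z p] by (simp add: dist_norm dist_real_def)
  have L2: "U 0 - U z' \<le> M * norm z'"
    using lipschitz_onD[OF assms(3), of 0 z'] by (simp add: dist_norm dist_real_def)
  have eq: "inner (p - z) z = - (norm (z - p))\<^sup>2 - inner (z - p) p"
    by (simp add: power2_norm_eq_inner inner_diff_left inner_diff_right inner_commute algebra_simps)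
  define r where "r = norm (z - p)"
  have r0: "r \<ge> 0" by (simp add: r_def)
  have quad: "- r\<^sup>2 + \<kappa> * M * r \<le> \<kappa>\<^sup>2 * M\<^sup>2"
  proof -
    have "0 \<le> (r - \<kappa> * M / 2)\<^sup>2" by simp
    moreover have "0 \<le> \<kappa>\<^sup>2 * M\<^sup>2" by simp
    ultimately show ?thesis by (simp add: power2_eq_square algebra_simps)
  qed
  have "inner (p - z) z \<le> - r\<^sup>2 - \<kappa> * (U p - U 0)" using eq key by (simp add: r_def)
  also have "\<dots> \<le> - r\<^sup>2 - \<kappa> * (U z - M * r - U z' - M * norm z')"
    using L1 L2 assms(5) by (intro diff_left_mono mult_left_mono) (auto simp: r_def)
  also have "\<dots> = (- r\<^sup>2 + \<kappa> * M * r) - \<kappa> * U z + \<kappa> * (U z' + M * norm z')"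
    by (simp add: algebra_simps)
  also have "\<dots> \<le> - \<kappa> * U z + \<kappa>\<^sup>2 * M\<^sup>2 + \<kappa> * (U z' + M * norm z')"
    using quad by simp
  finally show ?thesis by (simp add: p_def)
qed

end
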